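(* Fix $k$, $\theta^{(k)}\in\mathbb{R}^d$, step sizes $h_k,h_{k-1}>0$, $\beta_k\ge 0$, and a vector $p^{(k-1)}\in\mathbb{R}^d$; set $\theta^{(k-1)}=\theta^{(k)}-h_{k-1}p^{(k-1)}$. Define the natural Heavy-Ball momentum $$p^{(k)}=\beta_k\,G_X^{(k)\dagger}G_X^{(k,k-1)}p^{(k-1)}-h_k\,G^{(k)\dagger}\nabla L(\theta^{(k)})$$ and the quasi-natural Heavy-Ball momentum $$\overline{p^{(k)}}=\beta_k\,p^{(k-1)}-h_k\,G^{(k)\dagger}\nabla L(\theta^{(k)}).$$ Then $$\big\|\psi^{(k)T}\overline{p^{(k)}}-\psi^{(k)T}p^{(k)}\big\|_X\le h_{k-1}\,\beta_k\,\kappa_{\max}(\theta^{(k)})\,\|p^{(k-1)}\|_2^2+o\big(h_{k-1}\|p^{(k-1)}\|_2^2\big),$$ where the remainder $o(h_{k-1}\|p^{(k-1)}\|_2^2)$ is understood as $h_{k-1}\|p^{(k-1)}\|_2\to 0$ with $\theta^{(k)}$ fixed.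
   Context: $D:\mathbb{R}^d\to H$ is a twice continuously Fréchet differentiable map into a space $H$ of functions equipped with an inner product $(\cdot,\cdot)_X$ and norm $\|\cdot\|_X$ (the model class is $\mathcal{M}=D(\mathbb{R}^d)$). Write $\psi(\theta)=(\psi_1(\theta),\dots,\psi_d(\theta))$ with $\psi_i(\theta)=\frac{\partial D}{\partial\theta_i}(\theta)$, and for $c\in\mathbb{R}^d$, $\psi(\theta)^Tc=\sum_i c_i\psi_i(\theta)$. Let $\psi^{(j)}=\psi(\theta^{(j)})$. $G_X^{(k)}$ is the $d\times d$ Gram matrix with entries $(\psi^{(k)}_i,\psi^{(k)}_j)_X$, $G_X^{(k,k-1)}$ is the cross-Gram matrix with entries $(\psi^{(k)}_i,\psi^{(k-1)}_j)_X$, and $\dagger$ denotes the Moore–Penrose pseudo-inverse. $G^{(k)}$ is any symmetric positive semi-definite $d\times d$ matrix (Gram matrix of $\psi^{(k)}$ for some inner product $W$) and $\nabla L(\theta^{(k)})\in\mathbb{R}^d$ is the gradient of the parameter loss $L=\mathcal{L}\circ D$; these terms are the same in both momenta. $H_D(\theta):\mathbb{R}^d\times\mathbb{R}^d\to H$ denotes the second derivative (Hessian) of $D$ at $\theta$, and the maximal curvature is $\kappa_{\max}(\theta)=\max_{q\in\mathbb{R}^d,\|q\|_2=1}\|H_D(\theta)(q,q)\|_X$. *)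

theory Defs
  imports "HOL-Analysis.Analysis"
begin

definition pinv :: "real^'n^'n \<Rightarrow> real^'n^'n" where
  "pinv A = (THE B. A ** B ** A = A \<and> B ** A ** B = B \<and>
                    transpose (A ** B) = A ** B \<and> transpose (B ** A) = B ** A)"

definition sym_psd :: "real^'n^'n \<Rightarrow> bool" where
  "sym_psd G \<longleftrightarrow> transpose G = G \<and> (\<forall>x. 0 \<le> x \<bullet> (G *v x))"

text \<open>psi_i(theta) = dD/dtheta_i (theta), where DD theta is the Frechet derivative of D at theta.\<close>
definition psi :: "(real^'n \<Rightarrow> ((real^'n) \<Rightarrow>\<^sub>L 'h::real_normed_vector)) \<Rightarrow> real^'n \<Rightarrow> 'n \<Rightarrow> 'h" where
  "psi DD \<theta> i = blinfun_apply (DD \<theta>) (axis i 1)"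

definition psiT :: "(real^'n \<Rightarrow> ((real^'n) \<Rightarrow>\<^sub>L 'h::real_normed_vector)) \<Rightarrow> real^'n \<Rightarrow> real^'n \<Rightarrow> 'h" where
  "psiT DD \<theta> c = (\<Sum>i\<in>UNIV. c $ i *\<^sub>R psi DD \<theta> i)"

definition gramX :: "(real^'n \<Rightarrow> ((real^'n) \<Rightarrow>\<^sub>L 'h::real_inner)) \<Rightarrow> real^'n \<Rightarrow> real^'n^'n" where
  "gramX DD \<theta> = (\<chi> i j. inner (psi DD \<theta> i) (psi DD \<theta> j))"

definition cross_gramX :: "(real^'n \<Rightarrow> ((real^'n) \<Rightarrow>\<^sub>L 'h::real_inner)) \<Rightarrow> real^'n \<Rightarrow> real^'n \<Rightarrow> real^'n^'n" where
  "cross_gramX DD \<theta> \<theta>' = (\<chi> i j. inner (psi DD \<theta> i) (psi DD \<theta>' j))"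

definition kappa_max :: "(real^'n \<Rightarrow> ((real^'n) \<Rightarrow>\<^sub>L ((real^'n) \<Rightarrow>\<^sub>L 'h::real_normed_vector))) \<Rightarrow> real^'n \<Rightarrow> real" where
  "kappa_max D2 \<theta> = Sup {norm (blinfun_apply (blinfun_apply (D2 \<theta>) q) q) | q. norm q = 1}"

definition natural_hb :: "(real^'n \<Rightarrow> ((real^'n) \<Rightarrow>\<^sub>L 'h::real_inner)) \<Rightarrow> real^'n \<Rightarrow> real^'n
    \<Rightarrow> real \<Rightarrow> real \<Rightarrow> real^'n \<Rightarrow> real^'n^'n \<Rightarrow> real^'n \<Rightarrow> real^'n" where
  "natural_hb DD \<theta>k \<theta>km1 \<beta> hk pkm1 G g =
     \<beta> *\<^sub>R (pinv (gramX DD \<theta>k) *v (cross_gramX DD \<theta>k \<theta>km1 *v pkm1)) - hk *\<^sub>R (pinv G *v g)"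

definition quasi_natural_hb :: "real \<Rightarrow> real \<Rightarrow> real^'n \<Rightarrow> real^'n^'n \<Rightarrow> real^'n \<Rightarrow> real^'n" where
  "quasi_natural_hb \<beta> hk pkm1 G g = \<beta> *\<^sub>R pkm1 - hk *\<^sub>R (pinv G *v g)"

end

theory Submission imports Defs begin
definition penrose :: "real^'n^'n \<Rightarrow> real^'n^'n \<Rightarrow> bool" where
  "penrose A B \<longleftrightarrow> A ** B ** A = A \<and> B ** A ** B = B \<and>
                    transpose (A ** B) = A ** B \<and> transpose (B ** A) = B ** A"

lemma mv_inner: "(A *v x) \<bullet> (y::real^'n) = x \<bullet> (transpose A *v y)"
  by (simp add: dot_lmul_matrix[symmetric] inner_commute)

lemma sym_inner: "transpose A = A \<Longrightarrow> (A *v x) \<bullet> (y::real^'n) = x \<bullet> (A *v y)"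
  by (metis mv_inner)

lemma sym_from_inner:
  assumes "\<And>x y. ((A::real^'n^'n) *v x) \<bullet> y = x \<bullet> (A *v y)"
  shows "transpose A = A"
proof -
  have "transpose A *v y = A *v y" for y
  proof -
    have "x \<bullet> (transpose A *v y - A *v y) = 0" for x
      using assms[of x y] by (simp add: inner_diff_right mv_inner)
    from this[of "transpose A *v y - A *v y"] show ?thesis by simp
  qed
  then show ?thesis by (simp add: matrix_eq)
qed

lemma penrose_unique:
  assumes "penrose A B1" "penrose A B2"
  shows "B1 = B2"
proof -
  have a: "A ** B1 ** A = A" "B1 ** A ** B1 = B1" "transpose (A ** B1) = A ** B1" "transpose (B1 ** A) = B1 ** A"
      and b: "A ** B2 ** A = A" "B2 ** A ** B2 = B2" "transpose (A ** B2) = A ** B2" "transpose (B2 ** A) = B2 ** A"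
    using assms by (auto simp: penrose_def)
  have "B1 = B1 ** (A ** B1)" using a by (simp add: matrix_mul_assoc)
  also have "\<dots> = B1 ** transpose (A ** B1)" using a by simp
  also have "\<dots> = B1 ** (transpose B1 ** transpose A)" by (simp add: matrix_transpose_mul)
  also have "transpose A = transpose (A ** B2 ** A)" using b by simp
  also have "\<dots> = transpose A ** transpose B2 ** transpose A" by (simp add: matrix_transpose_mul matrix_mul_assoc)
  also have "B1 ** (transpose B1 ** (transpose A ** transpose B2 ** transpose A))
      = B1 ** (transpose (A ** B1) ** transpose (A ** B2))"
    by (simp add: matrix_transpose_mul matrix_mul_assoc)
  also have "\<dots> = B1 ** A ** B1 ** A ** B2" using a b by (simp add: matrix_mul_assoc)
  also have "\<dots> = B1 ** A ** B2" using a by simp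
  finally have 1: "B1 = B1 ** A ** B2" .
  have "B2 = (B2 ** A) ** B2" using b by simp
  also have "\<dots> = transpose (B2 ** A) ** B2" using b by simp
  also have "\<dots> = transpose A ** transpose B2 ** B2" by (simp add: matrix_transpose_mul)
  also have "transpose A = transpose (A ** B1 ** A)" using a by simp
  also have "\<dots> = transpose A ** transpose B1 ** transpose A" by (simp add: matrix_transpose_mul matrix_mul_assoc)
  also have "transpose A ** transpose B1 ** transpose A ** transpose B2 ** B2
      = transpose (B1 ** A) ** transpose (B2 ** A) ** B2"
    by (simp add: matrix_transpose_mul matrix_mul_assoc)
  also have "\<dots> = B1 ** A ** B2 ** A ** B2" using a b by (simp add: matrix_mul_assoc)
  also have "\<dots> = B1 ** A ** B2" using b(2) by (metis matrix_mul_assoc)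
  finally show ?thesis using 1 by simp
qed

lemma penrose_exists:
  assumes symA: "transpose A = (A::real^'n^'n)"
  shows "\<exists>B. penrose A B"
proof -
  define f where "f = (\<lambda>x. A *v x)"
  define V where "V = range f"
  have lf: "linear f" unfolding f_def by simp
  have fsym: "f x \<bullet> y = x \<bullet> f y" for x y unfolding f_def by (rule sym_inner[OF symA])
  have subV: "subspace V" unfolding V_def by (rule linear_subspace_image[OF lf subspace_UNIV])
  have spanV: "span V = V" using subV by (simp add: span_eq_iff)
  have fV: "f x \<in> V" for x unfolding V_def by simp
  have orth0: "f w = 0" if "\<And>v. v \<in> V \<Longrightarrow> w \<bullet> v = 0" for w
  proof -
    have "f w \<bullet> f w = w \<bullet> f (f w)" by (rule fsym)
    also have "\<dots> = 0" using that fV by blast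
    finally show ?thesis by simp
  qed
  have inj: "inj_on f V"
  proof (rule inj_onI)
    fix x y assume xy: "x \<in> V" "y \<in> V" "f x = f y"
    then have "x - y \<in> V" using subV by (simp add: subspace_diff)
    then obtain z where z: "x - y = f z" unfolding V_def by auto
    have "f (x - y) = 0" using xy lf by (simp add: linear_diff)
    then have "(x - y) \<bullet> (x - y) = 0" using z fsym[of z "x - y"] by simp
    then show "x = y" by simp
  qed
  obtain g where g: "range g \<subseteq> V" "linear g" "\<And>v. v \<in> V \<Longrightarrow> g (f v) = v"
    using linear_exists_left_inverse_on[OF lf subV inj] by blast
  define Q where "Q = (\<lambda>x. g (f x))"
  have Qprops: "f (Q x) = f x \<and> Q x \<in> V \<and> (\<forall>w\<in>V. (x - Q x) \<bullet> w = 0)" for x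
  proof -
    obtain y z where yz: "y \<in> span V" "\<And>w. w \<in> span V \<Longrightarrow> orthogonal z w" "x = y + z"
      using orthogonal_subspace_decomp_exists[of V x] by blast
    have y: "y \<in> V" using yz spanV by simp
    have zo: "\<And>w. w \<in> V \<Longrightarrow> z \<bullet> w = 0" using yz(2) spanV by (simp add: orthogonal_def)
    have "f z = 0" using orth0 zo by blast
    then have fx: "f x = f y" using yz(3) lf by (simp add: linear_add)
    have Qx: "Q x = y" unfolding Q_def fx using g(3)[OF y] .
    show ?thesis using fx Qx y zo yz(3) by simp
  qed
  have fgV: "f (g y) = y" if yV: "y \<in> V" for y
  proof -
    obtain x where x: "y = f x" using yV unfolding V_def by auto
    have "g y = Q x" using x Qprops[of x] g(3) by (simp add: Q_def)
    then show ?thesis using x Qprops[of x] by simp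
  qed
  have QV: "Q v = v" if "v \<in> V" for v using g(3)[OF that] by (simp add: Q_def)
  have Qsym: "Q x \<bullet> y = x \<bullet> Q y" for x y
  proof -
    have "Q x \<bullet> y = Q x \<bullet> Q y + Q x \<bullet> (y - Q y)" by (simp add: inner_diff_right)
    also have "Q x \<bullet> (y - Q y) = 0" using Qprops[of y] Qprops[of x] by (simp add: inner_commute)
    also have "x \<bullet> Q y = Q x \<bullet> Q y + (x - Q x) \<bullet> Q y" by (simp add: inner_diff_left)
    moreover have "(x - Q x) \<bullet> Q y = 0" using Qprops[of y] Qprops[of x] by simp
    ultimately show ?thesis by simp
  qed
  define M where "M = matrix g"
  have Mw: "M *v x = g x" for x unfolding M_def
    using matrix_works g(2) by (metis linear_matrix_vector_mul_eq)
  define B where "B = M ** M ** A"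
  have Bx: "B *v x = g (Q x)" for x
    by (simp add: B_def Q_def Mw f_def matrix_vector_mul_assoc[symmetric])
  have Ax: "A *v x = f x" for x by (simp add: f_def)
  have P1: "A ** B ** A = A"
  proof -
    have "(A ** B ** A) *v x = A *v x" for x
    proof -
      have "(A ** B ** A) *v x = f (g (Q (f x)))" by (simp add: matrix_vector_mul_assoc[symmetric] Bx Ax)
      also have "\<dots> = f x" using QV[OF fV[of x]] Qprops[of x] by (simp add: Q_def)
      finally show ?thesis by (simp add: Ax)
    qed
    then show ?thesis by (simp add: matrix_eq)
  qed
  have P2: "B ** A ** B = B"
  proof -
    have "(B ** A ** B) *v x = B *v x" for x
    proof -
      have "(B ** A ** B) *v x = g (Q (f (g (Q x))))" by (simp add: matrix_vector_mul_assoc[symmetric] Bx Ax)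
      also have "\<dots> = g (Q x)" using fgV Qprops[of x] QV by simp
      finally show ?thesis by (simp add: Bx)
    qed
    then show ?thesis by (simp add: matrix_eq)
  qed
  have AB: "(A ** B) *v x = Q x" for x
    using fgV Qprops[of x] by (simp add: matrix_vector_mul_assoc[symmetric] Bx Ax)
  have BA: "(B ** A) *v x = Q x" for x
    using QV[OF fV[of x]] by (simp add: matrix_vector_mul_assoc[symmetric] Bx Ax Q_def)
  have P3: "transpose (A ** B) = A ** B"
    by (rule sym_from_inner) (simp add: AB Qsym)
  have P4: "transpose (B ** A) = B ** A"
    by (rule sym_from_inner) (simp add: BA Qsym)
  show ?thesis using P1 P2 P3 P4 unfolding penrose_def by blast
qed

lemma pinv_penrose:
  assumes "transpose A = (A::real^'n^'n)"
  shows "penrose A (pinv A)"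
proof -
  obtain B where B: "penrose A B" using penrose_exists[OF assms] by blast
  have "\<exists>!B. penrose A B" using B penrose_unique by blast
  then have "penrose A (THE B. penrose A B)" by (rule theI')
  then show ?thesis unfolding pinv_def penrose_def[abs_def] by simp
qed

lemma psiT_eq: "psiT DD \<theta> c = blinfun_apply (DD \<theta>) (c::real^'n)"
proof -
  have "blinfun_apply (DD \<theta>) c = blinfun_apply (DD \<theta>) (\<Sum>i\<in>UNIV. c $ i *\<^sub>R axis i 1)"
    using basis_expansion[of c] by (simp add: scalar_mult_eq_scaleR)
  also have "\<dots> = psiT DD \<theta> c"
    by (simp add: psiT_def psi_def blinfun.sum_right blinfun.scaleR_right)
  finally show ?thesis by simp
qed

lemma gram_mv: "gramX DD \<theta> *v w = (\<chi> i. psi DD \<theta> i \<bullet> blinfun_apply (DD \<theta>) w)"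
  by (simp add: vec_eq_iff gramX_def matrix_vector_mult_def psiT_eq[symmetric] psiT_def
      inner_sum_right mult.commute)

lemma cross_mv: "cross_gramX DD \<theta> \<theta>' *v w = (\<chi> i. psi DD \<theta> i \<bullet> blinfun_apply (DD \<theta>') w)"
  by (simp add: vec_eq_iff cross_gramX_def matrix_vector_mult_def psiT_eq[symmetric] psiT_def
      inner_sum_right mult.commute)

lemma inner_bvec: "c \<bullet> (\<chi> i. psi DD \<theta> i \<bullet> v) = blinfun_apply (DD \<theta>) c \<bullet> v"
  by (simp add: inner_vec_def psiT_eq[symmetric] psiT_def inner_sum_left)

lemma proj_bound:
  fixes DD :: "real^'n \<Rightarrow> ((real^'n) \<Rightarrow>\<^sub>L 'h::real_inner)"
  shows "norm (blinfun_apply (DD \<theta>) p - blinfun_apply (DD \<theta>) (pinv (gramX DD \<theta>) *v (\<chi> i. psi DD \<theta> i \<bullet> v)))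
     \<le> norm (blinfun_apply (DD \<theta>) p - v)"
proof -
  define Gx where "Gx = gramX DD \<theta>"
  define B where "B = pinv Gx"
  define b where "b = (\<chi> i. psi DD \<theta> i \<bullet> v)"
  define \<Psi> where "\<Psi> = blinfun_apply (DD \<theta>)"
  have symG: "transpose Gx = Gx"
    by (simp add: Gx_def gramX_def transpose_def vec_eq_iff inner_commute)
  have pen: "penrose Gx B" unfolding B_def by (rule pinv_penrose[OF symG])
  have P1: "Gx ** B ** Gx = Gx" and P3: "transpose (Gx ** B) = Gx ** B"
    using pen by (auto simp: penrose_def)
  define S where "S = Gx ** B"
  have symS: "transpose S = S" using P3 by (simp add: S_def)
  have SS: "S ** S = S" using P1 by (simp add: S_def matrix_mul_assoc)
  have GS: "Gx ** S = Gx"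
  proof -
    have "Gx ** S = Gx ** transpose S" using symS by simp
    also have "\<dots> = transpose (Gx ** B ** Gx)" using symG by (simp add: S_def matrix_transpose_mul matrix_mul_assoc)
    also have "\<dots> = Gx" using P1 symG by simp
    finally show ?thesis .
  qed
  have gram_inner: "c \<bullet> (Gx *v w) = \<Psi> c \<bullet> \<Psi> w" for c w
    unfolding Gx_def gram_mv \<Psi>_def by (rule inner_bvec)
  have bin: "c \<bullet> b = \<Psi> c \<bullet> v" for c unfolding b_def \<Psi>_def by (rule inner_bvec)
  define r where "r = b - S *v b"
  have Gr: "Gx *v r = 0"
    by (simp add: r_def matrix_vector_mult_diff_distrib matrix_vector_mul_assoc GS)
  have "\<Psi> r \<bullet> \<Psi> r = 0" using gram_inner[of r r] Gr by simp
  then have Pr: "\<Psi> r = 0" by simp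
  have rb: "r \<bullet> b = 0" using bin[of r] Pr by simp
  have "(S *v b) \<bullet> (S *v b) = b \<bullet> (S *v (S *v b))" by (rule sym_inner[OF symS])
  also have "\<dots> = b \<bullet> (S *v b)" by (simp add: matrix_vector_mul_assoc SS)
  finally have SbSb: "(S *v b) \<bullet> (S *v b) = b \<bullet> (S *v b)" .
  have rSb: "r \<bullet> (S *v b) = 0"
    using SbSb by (simp add: r_def inner_diff_left)
  have "r \<bullet> r = 0"
    using rb rSb by (simp add: r_def inner_diff_right) 
  then have r0: "r = 0" by simp
  then have Sb: "S *v b = b" by (simp add: r_def)
  have orth: "\<Psi> c \<bullet> (v - \<Psi> (B *v b)) = 0" for c
  proof -
    have "\<Psi> c \<bullet> \<Psi> (B *v b) = c \<bullet> (Gx *v (B *v b))" by (simp add: gram_inner)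
    also have "\<dots> = c \<bullet> b" using Sb by (simp add: S_def matrix_vector_mul_assoc)
    finally show ?thesis using bin[of c] by (simp add: inner_diff_right)
  qed
  define e where "e = \<Psi> p - \<Psi> (B *v b)"
  define w where "w = v - \<Psi> (B *v b)"
  have ew: "e \<bullet> w = 0"
    using orth[of "p - B *v b"] by (simp add: e_def w_def \<Psi>_def blinfun.diff_right)
  have eq: "\<Psi> p - v = e - w" by (simp add: e_def w_def)
  have "e \<bullet> e \<le> (e - w) \<bullet> (e - w)"
    using ew by (simp add: inner_diff_left inner_diff_right inner_commute)
  then have "norm e \<le> norm (e - w)" by (simp add: norm_le)
  then have "norm e \<le> norm (\<Psi> p - v)" by (simp only: eq)
  then show ?thesis by (simp add: e_def \<Psi>_def B_def Gx_def b_def)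
qed

lemma kappa_bound:
  fixes D2 :: "real^'n \<Rightarrow> ((real^'n) \<Rightarrow>\<^sub>L ((real^'n) \<Rightarrow>\<^sub>L 'h::real_normed_vector))"
  shows "norm (blinfun_apply (blinfun_apply (D2 \<theta>) p) p) \<le> kappa_max D2 \<theta> * (norm p)\<^sup>2"
proof (cases "p = 0")
  case True
  then show ?thesis by simp
next
  case False
  define q where "q = (1 / norm p) *\<^sub>R p"
  have nq: "norm q = 1" using False by (simp add: q_def)
  have bdd: "bdd_above {norm (blinfun_apply (blinfun_apply (D2 \<theta>) q) q) | q. norm q = 1}"
  proof (rule bdd_aboveI)
    fix x assume "x \<in> {norm (blinfun_apply (blinfun_apply (D2 \<theta>) q) q) | q. norm q = 1}"
    then obtain q where q: "norm q = 1" "x = norm (blinfun_apply (blinfun_apply (D2 \<theta>) q) q)" by auto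
    have "x \<le> norm (blinfun_apply (D2 \<theta>) q) * norm q" using q norm_blinfun by metis
    also have "\<dots> \<le> norm (D2 \<theta>) * norm q * norm q" using q norm_blinfun[of "D2 \<theta>" q] by simp
    finally show "x \<le> norm (D2 \<theta>)" using q by simp
  qed
  have le: "norm (blinfun_apply (blinfun_apply (D2 \<theta>) q) q) \<le> kappa_max D2 \<theta>"
    unfolding kappa_max_def by (rule cSup_upper[OF _ bdd]) (use nq in blast)
  have "blinfun_apply (blinfun_apply (D2 \<theta>) q) q = (1 / norm p)^2 *\<^sub>R blinfun_apply (blinfun_apply (D2 \<theta>) p) p"
    by (simp add: q_def blinfun.scaleR_right blinfun.scaleR_left power2_eq_square)
  then have "norm (blinfun_apply (blinfun_apply (D2 \<theta>) q) q) = norm (blinfun_apply (blinfun_apply (D2 \<theta>) p) p) / (norm p)^2"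
    by (simp add: power2_eq_square divide_inverse)
  with le False show ?thesis by (simp add: divide_le_eq)
qed

theorem mainTheorem3:
  fixes D :: "real^'n \<Rightarrow> 'h::real_inner"
    and DD :: "real^'n \<Rightarrow> ((real^'n) \<Rightarrow>\<^sub>L 'h)"
    and D2 :: "real^'n \<Rightarrow> ((real^'n) \<Rightarrow>\<^sub>L ((real^'n) \<Rightarrow>\<^sub>L 'h))"
  assumes D_deriv: "\<And>\<theta>. (D has_derivative blinfun_apply (DD \<theta>)) (at \<theta>)"
    and DD_deriv: "\<And>\<theta>. (DD has_derivative blinfun_apply (D2 \<theta>)) (at \<theta>)"
    and D2_cont: "continuous_on UNIV D2"
  shows "\<forall>\<theta>k :: real^'n. \<forall>\<beta> hk :: real. \<forall>G :: real^'n^'n. \<forall>g :: real^'n.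
           \<beta> \<ge> 0 \<longrightarrow> hk > 0 \<longrightarrow> sym_psd G \<longrightarrow>
           (\<forall>\<epsilon>>0. \<exists>\<delta>>0. \<forall>hkm1 :: real. \<forall>pkm1 :: real^'n.
              hkm1 > 0 \<longrightarrow> hkm1 * norm pkm1 < \<delta> \<longrightarrow>
              norm (psiT DD \<theta>k (quasi_natural_hb \<beta> hk pkm1 G g)
                    - psiT DD \<theta>k (natural_hb DD \<theta>k (\<theta>k - hkm1 *\<^sub>R pkm1) \<beta> hk pkm1 G g))
              \<le> hkm1 * \<beta> * kappa_max D2 \<theta>k * (norm pkm1)\<^sup>2 + \<epsilon> * (hkm1 * (norm pkm1)\<^sup>2))"
proof (intro allI impI)
  fix \<theta>k :: "real^'n" and \<beta> hk :: real and G :: "real^'n^'n" and g :: "real^'n" and \<epsilon> :: real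
  assume b0: "\<beta> \<ge> 0" and "hk > 0" and "sym_psd G" and e0: "\<epsilon> > 0"
  define e' where "e' = \<epsilon> / (\<beta> + 1)"
  have e'0: "e' > 0" using e0 b0 by (simp add: e'_def)
  have be: "\<beta> * e' \<le> \<epsilon>"
  proof -
    have "\<beta> * e' = \<epsilon> * (\<beta> / (\<beta> + 1))" by (simp add: e'_def)
    also have "\<dots> \<le> \<epsilon> * 1" using e0 b0 by (intro mult_left_mono) auto
    finally show ?thesis by simp
  qed
  obtain d where d0: "d > 0" and H: "\<And>y. norm (y - \<theta>k) < d \<Longrightarrow>
      norm (DD y - DD \<theta>k - blinfun_apply (D2 \<theta>k) (y - \<theta>k)) \<le> e' * norm (y - \<theta>k)"
    using DD_deriv[of \<theta>k] e'0 unfolding has_derivative_at_alt by blast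
  show "\<exists>\<delta>>0. \<forall>hkm1 pkm1. 0 < hkm1 \<longrightarrow> hkm1 * norm pkm1 < \<delta> \<longrightarrow>
              norm (psiT DD \<theta>k (quasi_natural_hb \<beta> hk pkm1 G g)
                    - psiT DD \<theta>k (natural_hb DD \<theta>k (\<theta>k - hkm1 *\<^sub>R pkm1) \<beta> hk pkm1 G g))
              \<le> hkm1 * \<beta> * kappa_max D2 \<theta>k * (norm pkm1)\<^sup>2 + \<epsilon> * (hkm1 * (norm pkm1)\<^sup>2)"
  proof (intro exI[of _ d] conjI allI impI d0)
    fix h :: real and p :: "real^'n"
    assume h0: "0 < h" and hp: "h * norm p < d"
    define y where "y = \<theta>k - h *\<^sub>R p"
    define \<Psi> where "\<Psi> = blinfun_apply (DD \<theta>k)"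
    define \<Psi>' where "\<Psi>' = blinfun_apply (DD y)"
    define B where "B = pinv (gramX DD \<theta>k)"
    define bb where "bb = (\<chi> i. psi DD \<theta>k i \<bullet> \<Psi>' p)"
    have ny: "norm (y - \<theta>k) = h * norm p" using h0 by (simp add: y_def)
    have step1: "psiT DD \<theta>k (quasi_natural_hb \<beta> hk p G g)
                    - psiT DD \<theta>k (natural_hb DD \<theta>k y \<beta> hk p G g)
          = \<beta> *\<^sub>R (\<Psi> p - \<Psi> (B *v bb))"
      by (simp add: psiT_eq quasi_natural_hb_def natural_hb_def cross_mv \<Psi>_def \<Psi>'_def B_def bb_def
          blinfun.diff_right blinfun.scaleR_right algebra_simps)
    have step2: "norm (\<Psi> p - \<Psi> (B *v bb)) \<le> norm (\<Psi> p - \<Psi>' p)"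
      unfolding \<Psi>_def B_def bb_def by (rule proj_bound)
    define X where "X = DD y - DD \<theta>k - blinfun_apply (D2 \<theta>k) (y - \<theta>k)"
    have nX: "norm X \<le> e' * (h * norm p)" using H[of y] ny hp by (simp add: X_def)
    have D2y: "blinfun_apply (blinfun_apply (D2 \<theta>k) (y - \<theta>k)) p = - h *\<^sub>R blinfun_apply (blinfun_apply (D2 \<theta>k) p) p"
      by (simp add: y_def blinfun.scaleR_right blinfun.minus_right blinfun.minus_left blinfun.scaleR_left)
    have eq3: "\<Psi> p - \<Psi>' p = - blinfun_apply X p + h *\<^sub>R blinfun_apply (blinfun_apply (D2 \<theta>k) p) p"
      using D2y by (simp add: X_def \<Psi>_def \<Psi>'_def blinfun.diff_left blinfun.add_left algebra_simps)
    have "norm (\<Psi> p - \<Psi>' p) \<le> norm (blinfun_apply X p) + h * norm (blinfun_apply (blinfun_apply (D2 \<theta>k) p) p)"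
    proof -
      have "norm (- blinfun_apply X p + h *\<^sub>R blinfun_apply (blinfun_apply (D2 \<theta>k) p) p)
          \<le> norm (- blinfun_apply X p) + norm (h *\<^sub>R blinfun_apply (blinfun_apply (D2 \<theta>k) p) p)"
        by (rule norm_triangle_ineq)
      then show ?thesis unfolding eq3 using h0 by (simp only: norm_minus_cancel norm_scaleR abs_of_pos)
    qed
    also have "\<dots> \<le> e' * (h * norm p) * norm p + h * (kappa_max D2 \<theta>k * (norm p)\<^sup>2)"
    proof (rule add_mono)
      show "norm (blinfun_apply X p) \<le> e' * (h * norm p) * norm p"
        using norm_blinfun[of X p] nX by (meson mult_right_mono norm_ge_zero order_trans)
      show "h * norm (blinfun_apply (blinfun_apply (D2 \<theta>k) p) p) \<le> h * (kappa_max D2 \<theta>k * (norm p)\<^sup>2)"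
        using h0 kappa_bound[of D2 \<theta>k p] by (simp)
    qed
    finally have n3: "norm (\<Psi> p - \<Psi>' p) \<le> e' * (h * (norm p)\<^sup>2) + h * kappa_max D2 \<theta>k * (norm p)\<^sup>2"
      by (simp add: power2_eq_square algebra_simps)
    have "norm (psiT DD \<theta>k (quasi_natural_hb \<beta> hk p G g)
                    - psiT DD \<theta>k (natural_hb DD \<theta>k y \<beta> hk p G g))
          = \<beta> * norm (\<Psi> p - \<Psi> (B *v bb))" using b0 by (simp add: step1)
    also have "\<dots> \<le> \<beta> * (e' * (h * (norm p)\<^sup>2) + h * kappa_max D2 \<theta>k * (norm p)\<^sup>2)"
      using step2 n3 b0 by (intro mult_left_mono) auto
    also have "\<dots> = (\<beta> * e') * (h * (norm p)\<^sup>2) + h * \<beta> * kappa_max D2 \<theta>k * (norm p)\<^sup>2"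
      by (simp add: algebra_simps)
    also have "\<dots> \<le> \<epsilon> * (h * (norm p)\<^sup>2) + h * \<beta> * kappa_max D2 \<theta>k * (norm p)\<^sup>2"
      using be h0 by (intro add_right_mono mult_right_mono) auto
    finally show "norm (psiT DD \<theta>k (quasi_natural_hb \<beta> hk p G g)
                    - psiT DD \<theta>k (natural_hb DD \<theta>k (\<theta>k - h *\<^sub>R p) \<beta> hk p G g))
              \<le> h * \<beta> * kappa_max D2 \<theta>k * (norm p)\<^sup>2 + \<epsilon> * (h * (norm p)\<^sup>2)"
      by (simp add: y_def)
  qed
qed

end
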